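(* Consider Algorithm 3 (described in the context) under the Standing Assumption and Matrix Assumption of the context. There exists a constant $\xi_{\min}>0$, independent of the run, such that in any run of the algorithm there exist $\bar k_\xi\in\mathbb{N}$ and $\bar\xi_{\min}\in[\xi_{\min},\bar\xi_{-1}]$ with $\bar\xi_k=\bar\xi_{\min}$ for all $k\ge\bar k_\xi$.
   Context: Problem: $\min_x f(x)$ s.t. $c(x)=0$, $f(x)=\mathbb{E}[F(x,\omega)]$, $c:\mathbb{R}^n\to\mathbb{R}^m$ deterministic. Notation: $g_k=\nabla f(x_k)$, $c_k=c(x_k)$, $J_k=\nabla c(x_k)^T$; $\Delta q(x,\tau,g,H,d)=-\tau(g^Td+\frac12\max\{d^THd,0\})+\|c(x)\|_1$. Standing Assumption: an open convex set $\mathcal X$ contains all iterates; $f$ is $C^1$, bounded below on $\mathcal X$, $\nabla f$ bounded and $L$-Lipschitz on $\mathcal X$; $c$, $\nabla c^T$ bounded on $\mathcal X$; $\nabla c_i$ is $\gamma_i$-Lipschitz on $\mathcal X$; singular values of $\nabla c(x)^T$ bounded away from zero uniformly over $\mathcal X$; $\Gamma:=\sum_i\gamma_i$. Matrix Assumption: deterministic symmetric $H_k$ with $\|H_k\|_2\le\kappa_H$ and $u^TH_ku\ge\zeta\|u\|_2^2$ whenever $J_ku=0$. Algorithm 3 (inputs $x_0$, $\bar\tau_{-1}>0$, $\epsilon,\sigma\in(0,1)$, $\bar\xi_{-1}>0$, $\{\beta_k\}\subset(0,1]$, $\theta\ge0$): at iteration $k$, obtain stochastic gradient $\bar g_k$;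 $(\bar d_k,\bar y_k)$ solves $H_k\bar d_k+J_k^T\bar y_k=-\bar g_k$, $J_k\bar d_k=-c_k$ (assumed $\bar d_k\neq0$). $\bar\tau_k^{trial}=\infty$ if $\bar g_k^T\bar d_k+\max\{\bar d_k^TH_k\bar d_k,0\}\le0$, else $\frac{(1-\sigma)\|c_k\|_1}{\bar g_k^T\bar d_k+\max\{\bar d_k^TH_k\bar d_k,0\}}$; $\bar\tau_k=\bar\tau_{k-1}$ if $\bar\tau_{k-1}\le\bar\tau_k^{trial}$, else $(1-\epsilon)\bar\tau_k^{trial}$. $\bar\xi_k^{trial}=\frac{\Delta q(x_k,\bar\tau_k,\bar g_k,H_k,\bar d_k)}{\bar\tau_k\|\bar d_k\|_2^2}$; $\bar\xi_k=\bar\xi_{k-1}$ if $\bar\xi_{k-1}\le\bar\xi_k^{trial}$, else $(1-\epsilon)\bar\xi_k^{trial}$. With $D_k=(\bar\tau_kL+\Gamma)\|\bar d_k\|_2^2$, $\hat a_k=\beta_k\Delta q(x_k,\bar\tau_k,\bar g_k,H_k,\bar d_k)/D_k$, $\tilde a_k=\hat a_k-4\|c_k\|_1/D_k$, project both onto $[a_k,a_k+\theta\beta_k^2]$ with $a_k=\frac{\beta_k\bar\xi_k\bar\tau_k}{\bar\tau_kL+\Gamma}$ to get $\widehat\alpha_k,\widetilde\alpha_k$; $\bar\alpha_k=\widehat\alpha_k$ if $\widehat\alpha_k<1$, $1$ if $\widetilde\alpha_k\le1\le\widehat\alpha_k$, $\widetilde\alpha_k$ if $\widetilde\alpha_k>1$;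 $x_{k+1}=x_k+\bar\alpha_k\bar d_k$. *)

theory Defs
  imports "HOL-Analysis.Analysis"
begin

text \<open>Vectors in R^n are real^'n, constraint values in R^m are real^'m.
  The constraint Jacobian J(x) = nabla c(x)^T is an m x n matrix of type real^'n^'m
  (row i is nabla c_i(x)^T).\<close>

definition l1norm :: "real^'m \<Rightarrow> real" where
  "l1norm v = (\<Sum>i\<in>UNIV. \<bar>v $ i\<bar>)"

definition dq :: "(real^'n \<Rightarrow> real^'m) \<Rightarrow> real^'n \<Rightarrow> real \<Rightarrow> real^'n \<Rightarrow> real^'n^'n \<Rightarrow> real^'n \<Rightarrow> real" where
  "dq c x \<tau> g H d = - \<tau> * (g \<bullet> d + 1/2 * max (d \<bullet> (H *v d)) 0) + l1norm (c x)"

definition proj_int :: "real \<Rightarrow> real \<Rightarrow> real \<Rightarrow> real" where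
  "proj_int lo hi a = max lo (min a hi)"

text \<open>One run of Algorithm 3.  The sequences are: iterates x, stochastic gradients gb,
  matrices H, search directions d, multipliers y, merit parameters tau (tau k = bar tau_k),
  ratio parameters xi (xi k = bar xi_k) and step sizes alpha.  The values bar tau_{-1},
  bar xi_{-1} are the inputs tau_init, xi_init.\<close>
definition alg3_run ::
  "(real^'n \<Rightarrow> real^'m) \<Rightarrow> (real^'n \<Rightarrow> real^'n^'m) \<Rightarrow> real \<Rightarrow> real \<Rightarrow>
   real \<Rightarrow> real \<Rightarrow> real \<Rightarrow> real \<Rightarrow> (nat \<Rightarrow> real) \<Rightarrow> real \<Rightarrow>
   (nat \<Rightarrow> real^'n) \<Rightarrow> (nat \<Rightarrow> real^'n) \<Rightarrow> (nat \<Rightarrow> real^'n^'n) \<Rightarrow> (nat \<Rightarrow> real^'n) \<Rightarrow>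
   (nat \<Rightarrow> real^'m) \<Rightarrow> (nat \<Rightarrow> real) \<Rightarrow> (nat \<Rightarrow> real) \<Rightarrow> (nat \<Rightarrow> real) \<Rightarrow> bool" where
  "alg3_run c J L \<Gamma> tau_init xi_init \<epsilon> \<sigma> \<beta> \<theta> x gb H d y tau xi alpha \<longleftrightarrow>
    (\<forall>k.
      H k *v d k + transpose (J (x k)) *v y k = - gb k \<and>
      J (x k) *v d k = - c (x k) \<and>
      d k \<noteq> 0 \<and>
      (let tprev = (if k = 0 then tau_init else tau (k - 1));
           den = gb k \<bullet> d k + max (d k \<bullet> (H k *v d k)) 0
       in tau k = (if den \<le> 0 then tprev
                   else (let ttrial = (1 - \<sigma>) * l1norm (c (x k)) / den
                         in if tprev \<le> ttrial then tprev else (1 - \<epsilon>) * ttrial))) \<and>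
      (let xprev = (if k = 0 then xi_init else xi (k - 1));
           xtrial = dq c (x k) (tau k) (gb k) (H k) (d k) / (tau k * (norm (d k))\<^sup>2)
       in xi k = (if xprev \<le> xtrial then xprev else (1 - \<epsilon>) * xtrial)) \<and>
      (let D = (tau k * L + \<Gamma>) * (norm (d k))\<^sup>2;
           ahat = \<beta> k * dq c (x k) (tau k) (gb k) (H k) (d k) / D;
           atil = ahat - 4 * l1norm (c (x k)) / D;
           a = \<beta> k * xi k * tau k / (tau k * L + \<Gamma>);
           hal = proj_int a (a + \<theta> * (\<beta> k)\<^sup>2) ahat;
           tal = proj_int a (a + \<theta> * (\<beta> k)\<^sup>2) atil
       in alpha k = (if hal < 1 then hal else if tal \<le> 1 then 1 else tal)) \<and>
      x (Suc k) = x k + alpha k *\<^sub>R d k)"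

end

theory Submission
  imports Defs
begin


lemma dot_transp: "(transpose (A::real^'n^'m) *v y) \<bullet> z = y \<bullet> (A *v z)"
  by (metis dot_lmul_matrix vector_transpose_matrix transpose_transpose)

lemma decomp:
  fixes J :: "real^'n^'m" and c :: "real^'m" and \<kappa> :: real
  assumes kp: "\<kappa> > 0" and sv: "\<forall>w. \<kappa> * norm w \<le> norm (transpose J *v w)"
  shows "\<exists>v. J *v v = c \<and> \<kappa> * norm v \<le> norm c"
proof -
  define f where "f = (\<lambda>w::real^'m. (J ** transpose J) *v w)"
  have lin: "linear f" unfolding f_def by simp
  have fe: "f w = J *v (transpose J *v w)" for w unfolding f_def by (metis matrix_vector_mul_assoc)
  have key: "w \<bullet> f w = (transpose J *v w) \<bullet> (transpose J *v w)" for w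
    unfolding fe by (metis dot_transp)
  have "inj f"
  proof (rule linear_injective_0[OF lin, THEN iffD2], intro allI impI)
    fix w assume "f w = 0"
    then have "transpose J *v w = 0" using key[of w] by simp
    then show "w = 0" using sv kp by (metis mult_le_0_iff norm_eq_zero norm_ge_zero norm_zero order_antisym_conv linorder_not_le)
  qed
  then have "surj f" using linear_injective_imp_surjective[OF lin] by simp
  then obtain w where w: "f w = c" by (metis surjD)
  define v where "v = transpose J *v w"
  have Jv: "J *v v = c" using w unfolding fe v_def by simp
  have "(norm v)^2 = w \<bullet> c" using key[of w] w by (simp add: v_def power2_norm_eq_inner)
  also have "\<dots> \<le> norm w * norm c" by (simp add: norm_cauchy_schwarz)
  finally have h1: "(norm v)^2 \<le> norm w * norm c" .
  have h2: "\<kappa> * norm w \<le> norm v" using sv v_def by simp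
  have "\<kappa> * norm v \<le> norm c"
  proof (cases "v = 0")
    case True then show ?thesis by simp
  next
    case False
    then have nv: "norm v > 0" by simp
    have "\<kappa> * (norm v)^2 \<le> \<kappa> * norm w * norm c" using h1 kp by simp
    also have "\<dots> \<le> norm v * norm c" using h2 by (simp add: mult_right_mono)
    finally have "(\<kappa> * norm v) * norm v \<le> norm c * norm v" by (simp add: power2_eq_square algebra_simps)
    then show ?thesis using nv by simp
  qed
  then show ?thesis using Jv by blast
qed

lemma key_real:
  fixes a r K \<zeta> A \<tau> Q sc nd :: real
  assumes z: "\<zeta> > 0" and Kp: "K \<ge> 0" and Ap: "A > 0" and a: "a \<ge> 0" and r: "r \<ge> 0"
    and t: "\<tau> > 0" and nd: "nd \<ge> 0"
    and Q: "Q \<ge> \<zeta>*a^2 - 2*K*a*r - K*r^2"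
    and sc: "sc \<ge> A*\<tau>*r^2" and ndb: "nd \<le> a + r"
  shows "(min (\<zeta>/4) (A/((max 1 (6*K/\<zeta>))^2+1)) / 2) * \<tau> * nd^2 \<le> \<tau>/2 * max Q 0 + sc"
proof -
  define M where "M = max 1 (6*K/\<zeta>)"
  define \<xi> where "\<xi> = min (\<zeta>/4) (A/(M^2+1))"
  have M1: "M \<ge> 1" and M6: "M \<ge> 6*K/\<zeta>" unfolding M_def by auto
  have xi_le1: "\<xi> \<le> \<zeta>/4" and xi_le2: "\<xi> \<le> A/(M^2+1)" unfolding \<xi>_def by (simp_all only: min.cobounded1 min.cobounded2)
  have xi_pos: "\<xi> > 0" proof - have "M^2+1 > 0" by (simp add: add_nonneg_pos) then show ?thesis unfolding \<xi>_def using z Ap by simp qed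
  have P: "\<xi>*(a^2+r^2) \<le> max Q 0 / 2 + A*r^2"
  proof (cases "a \<ge> M*r")
    case True
    have KM: "K \<le> \<zeta>*M/6" using M6 z by (simp add: field_simps)
    have "2*K*a*r \<le> 2*(\<zeta>*M/6)*a*r" using mult_right_mono[OF KM, of "2*a*r"] a r by (simp add: algebra_simps)
    also have "\<dots> = \<zeta>/3 * a * (M*r)" by simp
    also have "\<dots> \<le> \<zeta>/3 * a * a" using True a z by (simp add: mult_left_mono)
    finally have e1: "2*K*a*r \<le> \<zeta>/3 * a^2" by (simp add: power2_eq_square)
    have "K*r^2 \<le> (\<zeta>*M/6)*r^2" using mult_right_mono[OF KM, of "r^2"] by simp
    also have "\<dots> \<le> (\<zeta>*M/6)*(M*r^2)" using M1 z r mult_right_mono[OF M1, of "r^2"] by (intro mult_left_mono) auto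
    also have "\<dots> = \<zeta>/6 * (M*r)^2" by (simp add: power2_eq_square)
    also have "\<dots> \<le> \<zeta>/6 * a^2" using True r M1 z by (intro mult_left_mono power_mono) auto
    finally have e2: "K*r^2 \<le> \<zeta>/6 * a^2" .
    have "Q \<ge> \<zeta>/2*a^2" using Q e1 e2 by linarith
    then have "max Q 0 / 2 \<ge> \<zeta>/4 * a^2" by simp
    moreover have "\<xi>*a^2 \<le> \<zeta>/4*a^2" using mult_right_mono[OF xi_le1, of "a^2"] by simp
    moreover have "\<xi>*r^2 \<le> A*r^2" proof -
      have m2: "M^2+1 \<ge> 1" by simp
      have "A/(M^2+1) \<le> A" using divide_left_mono[OF m2, of A] Ap m2 by simp
      then have "\<xi> \<le> A" using xi_le2 by linarith
      then show ?thesis using mult_right_mono[of \<xi> A "r^2"] by simp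
    qed
    ultimately show ?thesis by (simp add: algebra_simps)
  next
    case False
    then have "a \<le> M*r" by simp
    then have "a^2 \<le> M^2*r^2" using a by (metis power_mono power_mult_distrib)
    then have "\<xi>*(a^2+r^2) \<le> \<xi>*((M^2+1)*r^2)" using xi_pos by (simp add: algebra_simps)
    also have "\<dots> \<le> A/(M^2+1)*((M^2+1)*r^2)" using xi_le2 by (intro mult_right_mono) auto
    also have "\<dots> = A*r^2" using add_nonneg_pos[of "M^2" 1] by simp
    finally show ?thesis by simp
  qed
  have "nd^2 \<le> (a+r)^2" using nd ndb by (simp add: power_mono)
  also have "\<dots> \<le> 2*(a^2+r^2)" using sum_squares_ge_zero[of "a-r" 0] by (simp add: power2_eq_square algebra_simps)
  finally have nd2: "nd^2 \<le> 2*(a^2+r^2)" .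
  have "(\<xi>/2)*\<tau>*nd^2 \<le> (\<xi>/2)*\<tau>*(2*(a^2+r^2))" using nd2 xi_pos t by (intro mult_left_mono) auto
  also have "\<dots> = \<tau>*(\<xi>*(a^2+r^2))" by simp
  also have "\<dots> \<le> \<tau>*(max Q 0 / 2 + A*r^2)" using P t by (intro mult_left_mono) auto
  also have "\<dots> \<le> \<tau>/2 * max Q 0 + sc" using sc by (simp add: algebra_simps)
  finally show ?thesis unfolding \<xi>_def M_def by simp
qed


lemma Hnorm: assumes "onorm (\<lambda>v. H *v v) \<le> K" shows "norm (H *v (v::real^'n)) \<le> K * norm v"
proof -
  have "norm (H *v v) \<le> onorm (\<lambda>v. H *v v) * norm v"
    using onorm[OF matrix_vector_mul_bounded_linear[of H]] by simp
  also have "\<dots> \<le> K * norm v" using assms by (simp add: mult_right_mono)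
  finally show ?thesis .
qed

lemma gd_eq:
  fixes J0 :: "real^'n^'m" and H0 :: "real^'n^'n" and g d :: "real^'n" and y c0 :: "real^'m"
  assumes "H0 *v d + transpose J0 *v y = - g" "J0 *v d = - c0"
  shows "g \<bullet> d = - (d \<bullet> (H0 *v d)) + y \<bullet> c0"
proof -
  have "g = - (H0 *v d + transpose J0 *v y)" using assms(1) by (metis minus_minus)
  then have "g \<bullet> d = - ((H0 *v d) \<bullet> d) - (transpose J0 *v y) \<bullet> d" by (simp only: inner_add_left inner_minus_left diff_conv_add_uminus minus_add_distrib)
  also have "(transpose J0 *v y) \<bullet> d = - (y \<bullet> c0)" using assms(2) by (simp only: dot_transp) simp
  finally show ?thesis by (simp add: inner_commute)
qed

lemma l1_ge: "norm (v::real^'m) \<le> l1norm v" unfolding l1norm_def by (rule norm_le_l1_cart)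
lemma l1_nonneg: "0 \<le> l1norm (v::real^'m)" unfolding l1norm_def by (simp add: sum_nonneg)

lemma den_pos_c:
  fixes J0 :: "real^'n^'m" and H0 :: "real^'n^'n" and g d :: "real^'n" and y c0 :: "real^'m"
  assumes "H0 *v d + transpose J0 *v y = - g" "J0 *v d = - c0"
    and Hz: "\<forall>u. J0 *v u = 0 \<longrightarrow> \<zeta> * (norm u)\<^sup>2 \<le> u \<bullet> (H0 *v u)" and z: "\<zeta> > 0"
    and den: "g \<bullet> d + max (d \<bullet> (H0 *v d)) 0 > 0"
  shows "l1norm c0 > 0"
proof (rule ccontr)
  assume as: "\<not> l1norm c0 > 0"
  have "norm c0 \<le> 0" using l1_ge[of c0] as by linarith
  then have c0: "c0 = 0" by simp
  then have "J0 *v d = 0" using assms(2) by simp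
  then have "\<zeta> * (norm d)\<^sup>2 \<le> d \<bullet> (H0 *v d)" using Hz by simp
  then have "d \<bullet> (H0 *v d) \<ge> 0" using z by (smt (verit) mult_nonneg_nonneg zero_le_power2)
  then show False using den gd_eq[OF assms(1,2)] c0 by simp
qed

lemma step_bound:
  fixes J0 :: "real^'n^'m" and H0 :: "real^'n^'n" and g d :: "real^'n" and y :: "real^'m"
    and c :: "real^'n \<Rightarrow> real^'m" and x :: "real^'n"
  assumes eq1: "H0 *v d + transpose J0 *v y = - g" and eq2: "J0 *v d = - c x" and dnz: "d \<noteq> 0"
    and kp: "\<kappa> > 0" and sv: "\<forall>w. \<kappa> * norm w \<le> norm (transpose J0 *v w)"
    and Hb: "onorm (\<lambda>v. H0 *v v) \<le> K" and Kp: "K \<ge> 0"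
    and Hz: "\<forall>u. J0 *v u = 0 \<longrightarrow> \<zeta> * (norm u)\<^sup>2 \<le> u \<bullet> (H0 *v u)" and z: "\<zeta> > 0"
    and cb: "norm (c x) \<le> Bc"
    and tp: "0 < \<tau>" and tle: "\<tau> \<le> \<tau>0"
    and tden: "g \<bullet> d + max (d \<bullet> (H0 *v d)) 0 > 0 \<longrightarrow> \<tau> * (g \<bullet> d + max (d \<bullet> (H0 *v d)) 0) \<le> (1-\<sigma>) * l1norm (c x)"
    and sg: "0 < \<sigma>" "\<sigma> < 1"
  shows "(min (\<zeta>/4) ((\<sigma>*\<kappa>/(((\<bar>Bc\<bar>+1)/\<kappa>)*\<tau>0))/((max 1 (6*K/\<zeta>))^2+1)) / 2) \<le>
           dq c x \<tau> g H0 d / (\<tau> * (norm d)\<^sup>2)"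
proof -
  define R where "R = (\<bar>Bc\<bar>+1)/\<kappa>"
  define A where "A = \<sigma>*\<kappa>/(R*\<tau>0)"
  define l1 where "l1 = l1norm (c x)"
  define Q where "Q = d \<bullet> (H0 *v d)"
  have Rp: "R > 0" unfolding R_def using kp by simp
  have t0p: "\<tau>0 > 0" using tp tle by simp
  have Ap: "A > 0" unfolding A_def using sg kp Rp t0p by simp
  have l1n: "l1 \<ge> 0" unfolding l1_def by (rule l1_nonneg)
  have dqb: "dq c x \<tau> g H0 d \<ge> \<tau>/2 * max Q 0 + \<sigma> * l1"
  proof -
    have e: "dq c x \<tau> g H0 d = - \<tau> * (g \<bullet> d + max Q 0) + \<tau>/2 * max Q 0 + l1"
      unfolding dq_def l1_def Q_def by (simp add: algebra_simps)
    show ?thesis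
    proof (cases "g \<bullet> d + max Q 0 > 0")
      case True
      then have "\<tau> * (g \<bullet> d + max Q 0) \<le> (1-\<sigma>) * l1" using tden unfolding Q_def l1_def by simp
      then show ?thesis using e by (simp add: algebra_simps)
    next
      case False
      then have "- \<tau> * (g \<bullet> d + max Q 0) \<ge> 0" using tp by (simp add: mult_nonpos_nonneg mult_le_0_iff)
      moreover have "\<sigma> * l1 \<le> l1" using sg l1n by (simp add: mult_left_le_one_le)
      ultimately show ?thesis using e by linarith
    qed
  qed
  obtain v where Jv: "J0 *v v = - c x" and vb: "\<kappa> * norm v \<le> norm (c x)"
    using decomp[OF kp sv, of "- c x"] by auto
  define u where "u = d - v"
  have Ju: "J0 *v u = 0" unfolding u_def using Jv eq2 by (simp add: matrix_vector_mult_diff_distrib)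
  define a where "a = norm u"
  define r where "r = norm v"
  have duv: "d = u + v" unfolding u_def by simp
  have uHu: "\<zeta> * a^2 \<le> u \<bullet> (H0 *v u)" using Hz Ju unfolding a_def by simp
  have b1: "\<bar>u \<bullet> (H0 *v v)\<bar> \<le> K*a*r"
  proof -
    have "\<bar>u \<bullet> (H0 *v v)\<bar> \<le> norm u * norm (H0 *v v)" by (rule Cauchy_Schwarz_ineq2)
    also have "\<dots> \<le> norm u * (K * norm v)" using Hnorm[OF Hb] by (simp add: mult_left_mono)
    finally show ?thesis unfolding a_def r_def by (simp add: algebra_simps)
  qed
  have b2: "\<bar>v \<bullet> (H0 *v u)\<bar> \<le> K*a*r"
  proof -
    have "\<bar>v \<bullet> (H0 *v u)\<bar> \<le> norm v * norm (H0 *v u)" by (rule Cauchy_Schwarz_ineq2)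
    also have "\<dots> \<le> norm v * (K * norm u)" using Hnorm[OF Hb] by (simp add: mult_left_mono)
    finally show ?thesis unfolding a_def r_def by (simp add: algebra_simps)
  qed
  have b3: "\<bar>v \<bullet> (H0 *v v)\<bar> \<le> K*r^2"
  proof -
    have "\<bar>v \<bullet> (H0 *v v)\<bar> \<le> norm v * norm (H0 *v v)" by (rule Cauchy_Schwarz_ineq2)
    also have "\<dots> \<le> norm v * (K * norm v)" using Hnorm[OF Hb] by (simp add: mult_left_mono)
    finally show ?thesis unfolding r_def by (simp add: algebra_simps power2_eq_square)
  qed
  have Qe: "Q = u \<bullet> (H0 *v u) + u \<bullet> (H0 *v v) + v \<bullet> (H0 *v u) + v \<bullet> (H0 *v v)"
    unfolding Q_def duv by (simp add: matrix_vector_right_distrib inner_add_left inner_add_right)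
  have Qb: "Q \<ge> \<zeta>*a^2 - 2*K*a*r - K*r^2" using Qe uHu b1 b2 b3 by linarith
  have rR: "r \<le> R"
  proof -
    have "\<kappa> * r \<le> \<bar>Bc\<bar> + 1" using vb cb unfolding r_def by linarith
    then show ?thesis unfolding R_def using kp by (simp add: field_simps)
  qed
  have r0: "r \<ge> 0" unfolding r_def by simp
  have "\<kappa> * r \<le> l1" using vb l1_ge[of "c x"] unfolding r_def l1_def by linarith
  then have s1: "\<sigma> * \<kappa> * r \<le> \<sigma> * l1" using sg by (simp add: mult_left_mono mult.assoc)
  have "A*\<tau>*r^2 = (\<sigma>*\<kappa>*r) * ((\<tau>/\<tau>0) * (r/R))" unfolding A_def by (simp add: power2_eq_square mult.commute mult.left_commute)
  also have "\<dots> \<le> (\<sigma>*\<kappa>*r) * 1"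
  proof (rule mult_left_mono)
    have "\<tau>/\<tau>0 \<le> 1" "r/R \<le> 1" "\<tau>/\<tau>0 \<ge> 0" "r/R \<ge> 0" using tle t0p rR Rp r0 tp by auto
    then show "(\<tau>/\<tau>0) * (r/R) \<le> 1" by (metis mult_le_one)
    show "0 \<le> \<sigma>*\<kappa>*r" using sg kp r0 by simp
  qed
  finally have scb: "A*\<tau>*r^2 \<le> \<sigma> * l1" using s1 by simp
  have ndb: "norm d \<le> a + r" unfolding duv a_def r_def by (rule norm_triangle_ineq)
  have main: "(min (\<zeta>/4) (A/((max 1 (6*K/\<zeta>))^2+1)) / 2) * \<tau> * (norm d)^2 \<le> \<tau>/2 * max Q 0 + \<sigma> * l1"
    by (rule key_real[OF z Kp Ap _ r0 tp _ Qb scb ndb]) (simp_all add: a_def)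
  have pos: "\<tau> * (norm d)^2 > 0" using tp dnz by simp
  define \<xi>0 where "\<xi>0 = (min (\<zeta>/4) (A/((max 1 (6*K/\<zeta>))^2+1)) / 2)"
  have "\<xi>0 * (\<tau> * (norm d)^2) \<le> dq c x \<tau> g H0 d"
    using main dqb unfolding \<xi>0_def[symmetric] by (simp add: mult.assoc)
  then have h1: "\<xi>0 \<le> dq c x \<tau> g H0 d / (\<tau> * (norm d)^2)" by (subst pos_le_divide_eq[OF pos])
  have h2: "\<xi>0 = (min (\<zeta>/4) ((\<sigma>*\<kappa>/(((\<bar>Bc\<bar>+1)/\<kappa>)*\<tau>0))/((max 1 (6*K/\<zeta>))^2+1)) / 2)"
    by (simp only: \<xi>0_def A_def R_def)
  show ?thesis using h1 unfolding h2 .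
qed


lemma tau_step:
  fixes tprev l1 den t \<epsilon> \<sigma> :: real
  assumes tp: "tprev > 0" and l1: "l1 \<ge> 0" and dl: "den > 0 \<longrightarrow> l1 > 0"
    and e: "0 < \<epsilon>" "\<epsilon> < 1" and s: "0 < \<sigma>" "\<sigma> < 1"
    and t: "t = (if den \<le> 0 then tprev else (let ttrial = (1 - \<sigma>) * l1 / den
                   in if tprev \<le> ttrial then tprev else (1 - \<epsilon>) * ttrial))"
  shows "0 < t \<and> t \<le> tprev \<and> (den > 0 \<longrightarrow> t * den \<le> (1-\<sigma>) * l1)"
proof (cases "den \<le> 0")
  case True then show ?thesis using t tp by simp
next
  case False
  then have dp: "den > 0" by simp
  define tt where "tt = (1 - \<sigma>) * l1 / den"
  have ttp: "tt > 0" unfolding tt_def using dp dl s by simp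
  have ttd: "tt * den = (1-\<sigma>) * l1" unfolding tt_def using dp by simp
  show ?thesis
  proof (cases "tprev \<le> tt")
    case True
    then have "t = tprev" using t False unfolding tt_def by (simp add: Let_def)
    moreover have "tprev * den \<le> tt * den" using True dp by (simp add: mult_right_mono)
    ultimately show ?thesis using tp ttd by simp
  next
    case F2: False
    then have tv: "t = (1-\<epsilon>) * tt" using t False unfolding tt_def by (simp add: Let_def)
    have "(1-\<epsilon>) * tt \<le> tt" using e ttp by (simp add: mult_left_le_one_le)
    moreover have "(1-\<epsilon>) * tt > 0" using e ttp by simp
    moreover have "((1-\<epsilon>) * tt) * den \<le> tt * den" using \<open>(1-\<epsilon>) * tt \<le> tt\<close> dp by (simp add: mult_right_mono)
    ultimately show ?thesis using tv F2 ttd by simp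
  qed
qed

lemma xi_step:
  fixes xprev xt xk \<epsilon> m :: real
  assumes e: "0 < \<epsilon>" "\<epsilon> < 1" and xt: "xt \<ge> m" and m: "m > 0"
    and x: "xk = (if xprev \<le> xt then xprev else (1 - \<epsilon>) * xt)"
  shows "xk \<le> xprev \<and> min xprev ((1-\<epsilon>)*m) \<le> xk \<and> (xk \<noteq> xprev \<longrightarrow> xk \<le> (1-\<epsilon>) * xprev)"
proof (cases "xprev \<le> xt")
  case True then show ?thesis using x by simp
next
  case False
  then have xv: "xk = (1-\<epsilon>)*xt" using x by simp
  have "(1-\<epsilon>)*xt \<le> (1-\<epsilon>)*xprev" using False e by (intro mult_left_mono) auto
  moreover have "(1-\<epsilon>)*m \<le> (1-\<epsilon>)*xt" using xt e by (intro mult_left_mono) auto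
  moreover have "(1-\<epsilon>)*xt \<le> xt" using e xt m by (simp add: mult_left_le_one_le)
  ultimately show ?thesis using xv False by auto
qed

lemma eventually_const:
  fixes xi :: "nat \<Rightarrow> real"
  assumes dec: "\<And>k. xi (Suc k) \<le> xi k" and lb: "\<And>k. m \<le> xi k" and m: "m > 0"
    and jump: "\<And>k. xi (Suc k) \<noteq> xi k \<Longrightarrow> xi (Suc k) \<le> (1-\<epsilon>) * xi k"
    and e: "0 < \<epsilon>" "\<epsilon> < 1"
  shows "\<exists>N. \<forall>k\<ge>N. xi k = xi N"
proof -
  have "decseq xi" using dec by (simp add: decseq_SucI)
  then obtain L where lim: "xi \<longlonglongrightarrow> L" and Lle: "\<forall>i. L \<le> xi i"
    using decseq_convergent[of xi m] lb by blast
  have Lm: "m \<le> L" using lim lb by (intro LIMSEQ_le_const) auto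
  then have Lp: "L > 0" using m by simp
  have "L < L / (1-\<epsilon>)" using Lp e by (simp add: field_simps)
  then have "eventually (\<lambda>k. xi k < L / (1-\<epsilon>)) sequentially"
    by (rule order_tendstoD(2)[OF lim])
  then obtain N where N: "\<And>k. k \<ge> N \<Longrightarrow> xi k < L / (1-\<epsilon>)" by (auto simp: eventually_sequentially)
  have st: "xi (Suc k) = xi k" if "k \<ge> N" for k
  proof (rule ccontr)
    assume "xi (Suc k) \<noteq> xi k"
    then have "xi (Suc k) \<le> (1-\<epsilon>) * xi k" by (rule jump)
    also have "\<dots> < (1-\<epsilon>) * (L / (1-\<epsilon>))" using N[OF that] e by (intro mult_strict_left_mono) auto
    also have "\<dots> = L" using e by simp
    finally show False using Lle by (metis not_le)
  qed
  have "\<forall>k\<ge>N. xi k = xi N"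
  proof (intro allI impI)
    fix k assume "N \<le> k"
    then show "xi k = xi N"
    proof (induction k rule: dec_induct)
      case base then show ?case by simp
    next
      case (step k) then show ?case using st by simp
    qed
  qed
  then show ?thesis by blast
qed


theorem lemma3p4:
  fixes f :: "real^'n \<Rightarrow> real" and gradf :: "real^'n \<Rightarrow> real^'n"
    and c :: "real^'n \<Rightarrow> real^'m" and J :: "real^'n \<Rightarrow> real^'n^'m"
    and X :: "(real^'n) set" and L :: real and \<gamma> :: "'m \<Rightarrow> real"
    and \<kappa>H \<zeta> :: real
    and tau_init xi_init \<epsilon> \<sigma> \<theta> :: real and \<beta> :: "nat \<Rightarrow> real"
  assumes X_open: "open X" and X_convex: "convex X"
    and f_deriv: "\<And>z. z \<in> X \<Longrightarrow> (f has_derivative (\<lambda>h. gradf z \<bullet> h)) (at z)"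
    and gradf_cont: "continuous_on X gradf"
    and f_bdd_below: "\<exists>B. \<forall>z\<in>X. B \<le> f z"
    and gradf_bdd: "\<exists>B. \<forall>z\<in>X. norm (gradf z) \<le> B"
    and gradf_lip: "\<And>z w. z \<in> X \<Longrightarrow> w \<in> X \<Longrightarrow> norm (gradf z - gradf w) \<le> L * norm (z - w)"
    and c_deriv: "\<And>z. z \<in> X \<Longrightarrow> (c has_derivative (\<lambda>h. J z *v h)) (at z)"
    and c_bdd: "\<exists>B. \<forall>z\<in>X. norm (c z) \<le> B"
    and J_bdd: "\<exists>B. \<forall>z\<in>X. onorm (\<lambda>h. J z *v h) \<le> B"
    and gradc_lip: "\<And>i z w. z \<in> X \<Longrightarrow> w \<in> X \<Longrightarrow>
                      norm (row i (J z) - row i (J w)) \<le> \<gamma> i * norm (z - w)"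
    and sv_bdd: "\<exists>\<kappa>>0. \<forall>z\<in>X. \<forall>v. \<kappa> * norm v \<le> norm (transpose (J z) *v v)"
    and \<zeta>_pos: "\<zeta> > 0"
    and tau_init_pos: "tau_init > 0" and \<epsilon>_range: "0 < \<epsilon>" "\<epsilon> < 1"
    and \<sigma>_range: "0 < \<sigma>" "\<sigma> < 1" and xi_init_pos: "xi_init > 0"
    and \<beta>_range: "\<And>k. 0 < \<beta> k \<and> \<beta> k \<le> 1" and \<theta>_nonneg: "\<theta> \<ge> 0"
  shows "\<exists>\<xi>min>0. \<forall>x gb H d y tau xi alpha.
           alg3_run c J L (\<Sum>i\<in>UNIV. \<gamma> i) tau_init xi_init \<epsilon> \<sigma> \<beta> \<theta> x gb H d y tau xi alpha \<and>
           (\<forall>k. x k \<in> X) \<and>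
           (\<forall>k. transpose (H k) = H k \<and> onorm (\<lambda>v. H k *v v) \<le> \<kappa>H \<and>
                (\<forall>u. J (x k) *v u = 0 \<longrightarrow> \<zeta> * (norm u)\<^sup>2 \<le> u \<bullet> (H k *v u)))
           \<longrightarrow> (\<exists>kbar \<xi>bar. \<xi>min \<le> \<xi>bar \<and> \<xi>bar \<le> xi_init \<and> (\<forall>k\<ge>kbar. xi k = \<xi>bar))"
proof -
  obtain \<kappa> where kp: "\<kappa> > 0" and sv: "\<forall>z\<in>X. \<forall>v. \<kappa> * norm v \<le> norm (transpose (J z) *v v)"
    using sv_bdd by blast
  obtain Bc where cb: "\<forall>z\<in>X. norm (c z) \<le> Bc" using c_bdd by blast
  define K where "K = max \<kappa>H 0"
  define \<xi>t where "\<xi>t = (min (\<zeta>/4) ((\<sigma>*\<kappa>/(((\<bar>Bc\<bar>+1)/\<kappa>)*tau_init))/((max 1 (6*K/\<zeta>))^2+1)) / 2)"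
  have \<xi>t_pos: "\<xi>t > 0"
  proof -
    have "(\<bar>Bc\<bar>+1)/\<kappa> > 0" using kp by simp
    then have "\<sigma>*\<kappa>/(((\<bar>Bc\<bar>+1)/\<kappa>)*tau_init) > 0" using \<sigma>_range kp tau_init_pos by simp
    moreover have "(max 1 (6*K/\<zeta>))^2+1 > 0" by (simp add: add_nonneg_pos)
    ultimately have "\<sigma>*\<kappa>/(((\<bar>Bc\<bar>+1)/\<kappa>)*tau_init)/((max 1 (6*K/\<zeta>))^2+1) > 0" by (rule divide_pos_pos)
    then have "0 < min (\<zeta>/4) (\<sigma>*\<kappa>/(((\<bar>Bc\<bar>+1)/\<kappa>)*tau_init)/((max 1 (6*K/\<zeta>))^2+1))"
    proof -
      have minpos: "\<And>a b::real. 0<a \<Longrightarrow> 0<b \<Longrightarrow> 0 < min a b" by simp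
      show ?thesis by (rule minpos[OF _ \<open>0 < \<sigma>*\<kappa>/(((\<bar>Bc\<bar>+1)/\<kappa>)*tau_init)/((max 1 (6*K/\<zeta>))^2+1)\<close>]) (use \<zeta>_pos in simp)
    qed
    then show ?thesis unfolding \<xi>t_def by (rule divide_pos_pos) simp
  qed
  define \<xi>min where "\<xi>min = min xi_init ((1-\<epsilon>)*\<xi>t)"
  have \<xi>min_pos: "\<xi>min > 0" unfolding \<xi>min_def using xi_init_pos \<xi>t_pos \<epsilon>_range by simp
  show ?thesis
  proof (intro exI[of _ \<xi>min] conjI allI impI \<xi>min_pos)
    fix x gb H d y tau xi alpha
    assume as: "alg3_run c J L (\<Sum>i\<in>UNIV. \<gamma> i) tau_init xi_init \<epsilon> \<sigma> \<beta> \<theta> x gb H d y tau xi alpha \<and>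
           (\<forall>k. x k \<in> X) \<and>
           (\<forall>k. transpose (H k) = H k \<and> onorm (\<lambda>v. H k *v v) \<le> \<kappa>H \<and>
                (\<forall>u. J (x k) *v u = 0 \<longrightarrow> \<zeta> * (norm u)\<^sup>2 \<le> u \<bullet> (H k *v u)))"
    then have run: "alg3_run c J L (\<Sum>i\<in>UNIV. \<gamma> i) tau_init xi_init \<epsilon> \<sigma> \<beta> \<theta> x gb H d y tau xi alpha"
      and xX: "\<And>k. x k \<in> X"
      and Hz: "\<And>k. \<forall>u. J (x k) *v u = 0 \<longrightarrow> \<zeta> * (norm u)\<^sup>2 \<le> u \<bullet> (H k *v u)"
      by auto
    have Hb: "\<And>k. onorm (\<lambda>v. H k *v v) \<le> K" using as unfolding K_def by (meson le_max_iff_disj)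
    have e1: "\<And>k. H k *v d k + transpose (J (x k)) *v y k = - gb k"
      and e2: "\<And>k. J (x k) *v d k = - c (x k)"
      and dnz: "\<And>k. d k \<noteq> 0"
      using run unfolding alg3_run_def by blast+
    define tp where "tp k = (if k = 0 then tau_init else tau (k - 1))" for k
    define den where "den k = gb k \<bullet> d k + max (d k \<bullet> (H k *v d k)) 0" for k
    have etau: "\<And>k. tau k = (if den k \<le> 0 then tp k
                   else (let ttrial = (1 - \<sigma>) * l1norm (c (x k)) / den k
                         in if tp k \<le> ttrial then tp k else (1 - \<epsilon>) * ttrial))"
      using run unfolding alg3_run_def tp_def den_def by meson
    define xp where "xp k = (if k = 0 then xi_init else xi (k - 1))" for k
    define xt where "xt k = dq c (x k) (tau k) (gb k) (H k) (d k) / (tau k * (norm (d k))\<^sup>2)" for k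
    have exi: "\<And>k. xi k = (if xp k \<le> xt k then xp k else (1 - \<epsilon>) * xt k)"
      using run unfolding alg3_run_def xp_def xt_def Let_def by meson
    have Kp: "K \<ge> 0" unfolding K_def by simp
    have tstep: "tp k > 0 \<Longrightarrow> 0 < tau k \<and> tau k \<le> tp k \<and> (den k > 0 \<longrightarrow> tau k * den k \<le> (1-\<sigma>) * l1norm (c (x k)))" for k
    proof (rule tau_step[OF _ l1_nonneg _ \<epsilon>_range \<sigma>_range etau])
      show "0 < den k \<longrightarrow> 0 < l1norm (c (x k))"
        using den_pos_c[OF e1 e2 Hz \<zeta>_pos] unfolding den_def by blast
    qed
    have tpos: "0 < tau k \<and> tau k \<le> tau_init" for k
    proof (induction k)
      case 0 then show ?case using tstep[of 0] tau_init_pos unfolding tp_def by simp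
    next
      case (Suc k) then show ?case using tstep[of "Suc k"] unfolding tp_def by auto
    qed
    have xtb: "\<xi>t \<le> xt k" for k
    proof -
      have "0 < tp k" unfolding tp_def using tpos tau_init_pos by simp
      then have td: "den k > 0 \<longrightarrow> tau k * den k \<le> (1-\<sigma>) * l1norm (c (x k))" using tstep by blast
      show ?thesis unfolding \<xi>t_def xt_def
        by (rule step_bound[where c=c and x="x k", OF e1 e2 dnz kp _ Hb Kp Hz \<zeta>_pos _ _ _ _ \<sigma>_range])
           (use sv xX cb tpos td in \<open>auto simp: den_def\<close>)
    qed
    have xs: "xi k \<le> xp k \<and> min (xp k) ((1-\<epsilon>)*\<xi>t) \<le> xi k \<and> (xi k \<noteq> xp k \<longrightarrow> xi k \<le> (1-\<epsilon>) * xp k)" for k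
      by (rule xi_step[OF \<epsilon>_range xtb \<xi>t_pos exi])
    have bnd: "\<xi>min \<le> xi k \<and> xi k \<le> xi_init" for k
    proof (induction k)
      case 0 then show ?case using xs[of 0] unfolding xp_def \<xi>min_def by auto
    next
      case (Suc k) then show ?case using xs[of "Suc k"] unfolding xp_def \<xi>min_def by auto
    qed
    obtain N where N: "\<forall>k\<ge>N. xi k = xi N"
    proof -
      have "\<exists>N. \<forall>k\<ge>N. xi k = xi N"
      proof (rule eventually_const[OF _ _ \<xi>min_pos _ \<epsilon>_range])
        show "xi (Suc k) \<le> xi k" for k using xs[of "Suc k"] unfolding xp_def by simp
        show "\<xi>min \<le> xi k" for k using bnd by blast
        show "xi (Suc k) \<le> (1-\<epsilon>) * xi k" if "xi (Suc k) \<noteq> xi k" for k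
          using xs[of "Suc k"] that unfolding xp_def by simp
      qed
      then show ?thesis using that by blast
    qed
    show "\<exists>kbar \<xi>bar. \<xi>min \<le> \<xi>bar \<and> \<xi>bar \<le> xi_init \<and> (\<forall>k\<ge>kbar. xi k = \<xi>bar)"
      using N bnd[of N] by blast
  qed
qed

end
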